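(* Let $n\ge 3$ and let $P(G(n))$ be the power graph of the gyrogroup $G(n)$ (defined in the context). Then $P(G(n))$ is planar for $n=3$ and non-planar for every $n\ge 4$.
   Context: Let $n\ge 3$ be an integer and $m=2^{n-1}$. Let $P(n)=\{0,1,\dots,m-1\}$, $H(n)=\{m,m+1,\dots,2^n-1\}$ and $G(n)=P(n)\cup H(n)$. For $i,j\in G(n)$ let $t,s,k\in P(n)$ be the residues modulo $m$ (taken in $\{0,\dots,m-1\}$) of $i+j$, $i+(\frac m2-1)j$ and $(\frac m2+1)i+(\frac m2-1)j$, respectively, and define $i\oplus j=t$ if $i,j\in P(n)$; $i\oplus j=t+m$ if $i\in P(n),j\in H(n)$; $i\oplus j=s+m$ if $i\in H(n),j\in P(n)$; $i\oplus j=k$ if $i,j\in H(n)$. Then $(G(n),\oplus)$ is a gyrogroup with identity $e=0$, and $P(n)$ is the cyclic group of order $m$ under addition mod $m$. Powers are defined by $a^1=a$, $a^{k+1}=a^k\oplus a$. The power graph $P(G(n))$ is the simple undirected graph with vertex set $G(n)$ in which distinct vertices $u,v$ are adjacent if and only if $u^k=v$ or $v^k=u$ for some positive integer $k$. *)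

theory Defs
  imports Main "Graph_Theory.Graph_Theory"
begin

text \<open>The gyrogroup G(n) on the carrier {0,...,2^n - 1}; m = 2^(n-1),
  P(n) = {0..<m}, H(n) = {m..<2^n}.\<close>

definition gyro_op :: "nat \<Rightarrow> nat \<Rightarrow> nat \<Rightarrow> nat" where
  "gyro_op n i j =
    (let m = 2 ^ (n - 1);
         t = (i + j) mod m;
         s = (i + (m div 2 - 1) * j) mod m;
         k = ((m div 2 + 1) * i + (m div 2 - 1) * j) mod m
     in if i < m \<and> j < m then t
        else if i < m \<and> m \<le> j then t + m
        else if m \<le> i \<and> j < m then s + m
        else k)"

definition gyro_carrier :: "nat \<Rightarrow> nat set" where
  "gyro_carrier n = {0..<2 ^ n}"

text \<open>Powers: a^1 = a, a^(k+1) = a^k \<oplus> a (only positive exponents are used).\<close>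
fun gyro_pow :: "nat \<Rightarrow> nat \<Rightarrow> nat \<Rightarrow> nat" where
  "gyro_pow n a 0 = 0"
| "gyro_pow n a (Suc 0) = a"
| "gyro_pow n a (Suc (Suc k)) = gyro_op n (gyro_pow n a (Suc k)) a"

text \<open>Power graph as a symmetric digraph (the Graph_Theory convention for undirected graphs).\<close>
definition power_graph :: "nat \<Rightarrow> nat pair_pre_digraph" where
  "power_graph n =
    \<lparr> pverts = gyro_carrier n,
      parcs = {(u, v). u \<in> gyro_carrier n \<and> v \<in> gyro_carrier n \<and> u \<noteq> v \<and>
                 (\<exists>k>0. gyro_pow n u k = v \<or> gyro_pow n v k = u)} \<rparr>"

end

theory Submission
  imports Defs
begin

lemma mod_helper:
  fixes a M :: nat
  assumes "M \<le> a" "a < 2 * M"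
  shows "a mod M + M = a"
proof -
  have "a mod M = (a - M) mod M" using assms le_mod_geq by blast
  also have "\<dots> = a - M" using assms by simp
  finally show ?thesis using assms by simp
qed

lemma gp_Suc:
  assumes "a < 2 ^ n" "n \<ge> 1"
  shows "gyro_pow n a (Suc k) = gyro_op n (gyro_pow n a k) a"
proof (cases k)
  case 0
  have m: "(2::nat) ^ n = 2 * 2 ^ (n - 1)" using assms(2)
    by (metis Suc_diff_1 less_le_trans power_Suc zero_less_one)
  show ?thesis using 0 assms m by (auto simp: gyro_op_def Let_def mod_helper)
next
  case (Suc j)
  then show ?thesis by simp
qed

lemma gp_P:
  assumes "a < 2 ^ (n - 1)" "n \<ge> 1"
  shows "gyro_pow n a k = (k * a) mod 2 ^ (n - 1)"
proof (induction k)
  case 0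
  then show ?case by simp
next
  case (Suc k)
  have "a < 2 ^ n" using assms
    by (metis One_nat_def diff_less less_trans power_strict_increasing_iff one_less_numeral_iff
        semiring_norm(76) zero_less_one less_le_trans)
  then have "gyro_pow n a (Suc k) = gyro_op n ((k * a) mod 2 ^ (n - 1)) a"
    using gp_Suc assms Suc by simp
  also have "\<dots> = ((k * a) mod 2 ^ (n - 1) + a) mod 2 ^ (n - 1)"
    using assms by (simp add: gyro_op_def Let_def)
  also have "\<dots> = (Suc k * a) mod 2 ^ (n - 1)"
    by (simp add: mod_add_right_eq add.commute)
  finally show ?case .
qed

lemma gp_H3:
  assumes "4 \<le> a" "a < 8"
  shows "gyro_pow 3 a k = (if even k then 0 else a)"
proof (induction k)
  case 0
  then show ?case by simp
next
  case (Suc k)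
  have "gyro_pow 3 a (Suc k) = gyro_op 3 (gyro_pow 3 a k) a"
    using gp_Suc[of a 3 k] assms by simp
  then show ?case using Suc assms mod_helper[of 4 a] by (auto simp: gyro_op_def Let_def)
qed

lemma pow_m_zero:
  assumes "a < 2 ^ (n - 1)" "n \<ge> 1"
  shows "gyro_pow n a (2 ^ (n - 1)) = 0"
  using gp_P[OF assms] by simp

lemma odd_reach:
  assumes "a < 2 ^ (n - 1)" "n \<ge> 2" "odd a" "b < 2 ^ (n - 1)"
  shows "\<exists>k>0. gyro_pow n a k = b"
proof -
  define m :: nat where "m = 2 ^ (n - 1)"
  have m2: "m \<ge> 2"
  proof -
    have "(2::nat) ^ 1 \<le> 2 ^ (n - 1)" using assms(2) by (intro power_increasing) auto
    then show ?thesis unfolding m_def by simp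
  qed
  have a0: "a \<noteq> 0" using odd_pos[OF assms(3)] by simp
  have g: "gcd a m = 1" unfolding m_def using assms(3)
    by (simp add: coprime_commute)
  obtain x y where xy: "a * x = m * y + gcd a m" using bezout_nat[OF a0] by blast
  have ax1: "a * x = 1 + y * m" using xy g by simp
  have ax: "(a * x) mod m = 1" unfolding ax1 using m2 by (simp only: mod_mult_self1) simp
  define k where "k = x * b + m"
  have "(k * a) mod m = ((a * x) * b + m * a) mod m" unfolding k_def by (simp add: algebra_simps)
  also have "\<dots> = ((a * x) * b) mod m" by simp
  also have "\<dots> = (((a * x) mod m) * b) mod m" by (simp add: mod_mult_left_eq)
  also have "\<dots> = b" using ax assms(4) m_def by simp
  finally have "(k * a) mod m = b" .
  moreover have "k > 0" unfolding k_def using m2 by simp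
  ultimately show ?thesis using gp_P[of a n k] assms m_def by auto
qed

definition V5 :: "nat set" where "V5 = {0,1,3,5,7}"

definition K5g :: "nat pair_pre_digraph" where
  "K5g = \<lparr> pverts = V5, parcs = {(u,v). u \<in> V5 \<and> v \<in> V5 \<and> u \<noteq> v} \<rparr>"

lemma K5g_complete: "K\<^bsub>5\<^esub> (with_proj K5g)"
  unfolding complete_digraph_pair_def
proof (intro conjI)
  show "finite (pverts K5g)" by (simp add: K5g_def V5_def)
  show "card (pverts K5g) = 5" by (simp add: K5g_def V5_def)
  show "parcs K5g = {(u,v). (u,v) \<in> (pverts K5g \<times> pverts K5g) \<and> u \<noteq> v}" by (auto simp add: K5g_def)
qed

lemma wf_power_graph: "wf_digraph (with_proj (power_graph n))"
  by unfold_locales (auto simp: power_graph_def)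

lemma K5g_sub:
  assumes "n \<ge> 4"
  shows "subgraph (with_proj K5g) (with_proj (power_graph n))"
proof (rule subgraphI)
  have m8: "(8::nat) \<le> 2 ^ (n - 1)"
  proof -
    have "(2::nat) ^ 3 \<le> 2 ^ (n - 1)" using assms by (intro power_increasing) auto
    then show ?thesis by simp
  qed
  have m16: "(8::nat) < 2 ^ n"
  proof -
    have "(2::nat) ^ 4 \<le> 2 ^ n" using assms by (intro power_increasing) auto
    then show ?thesis by simp
  qed
  have n1: "n \<ge> 2" using assms by simp
  have adj: "\<exists>k>0. gyro_pow n u k = v \<or> gyro_pow n v k = u"
    if "u \<in> {0,1,3,5,7}" "v \<in> {0,1,3,5,7}" "u \<noteq> v" for u v
  proof -
    have ul: "u < 2 ^ (n - 1)" and vl: "v < 2 ^ (n - 1)" using that m8 by auto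
    show ?thesis
    proof (cases "u = 0")
      case True
      then show ?thesis using pow_m_zero[OF vl] n1 by (intro exI[of _ "2 ^ (n - 1)"]) auto
    next
      case False
      then have "odd u" using that by auto
      then show ?thesis using odd_reach[OF ul n1 _ vl] by blast
    qed
  qed
  show "verts (with_proj K5g) \<subseteq> verts (with_proj (power_graph n))"
    using m8 m16 by (auto simp: K5g_def V5_def power_graph_def gyro_carrier_def)
  show "arcs (with_proj K5g) \<subseteq> arcs (with_proj (power_graph n))"
  proof
    fix e assume e: "e \<in> arcs (with_proj K5g)"
    obtain u v where uv: "e = (u, v)" by (cases e)
    have u: "u \<in> {0,1,3,5,7}" and v: "v \<in> {0,1,3,5,7}" and ne: "u \<noteq> v"
      using e uv by (auto simp: K5g_def V5_def)
    have "u < 2 ^ n" "v < 2 ^ n" using u v m8 m16 by auto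
    then show "e \<in> arcs (with_proj (power_graph n))"
      using adj[OF u v ne] uv ne by (auto simp: power_graph_def gyro_carrier_def)
  qed
  show "compatible (with_proj (power_graph n)) (with_proj K5g)" by auto
  show "wf_digraph (with_proj K5g)" by unfold_locales (auto simp: K5g_def)
  show "wf_digraph (with_proj (power_graph n))" by (rule wf_power_graph)
qed

lemma not_planar:
  assumes "n \<ge> 4"
  shows "\<not> kuratowski_planar (with_proj (power_graph n))"
proof -
  interpret pair_graph K5g by (rule pair_graphI_complete[OF K5g_complete])
  have "subdivision (with_proj K5g, swap_in (parcs K5g)) (with_proj K5g, swap_in (parcs K5g))"
    by (rule subdivision_base) (rule bidirected_digraph)
  then show ?thesis unfolding kuratowski_planar_def
    using K5g_sub[OF assms] K5g_complete by blast
qed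


lemma arc3:
  assumes "(u, v) \<in> parcs (power_graph 3)" "4 \<le> v"
  shows "u = 0"
proof -
  have uv: "u < 8" "v < 8" "u \<noteq> v" and ex: "\<exists>k>0. gyro_pow 3 u k = v \<or> gyro_pow 3 v k = u"
    using assms(1) by (auto simp: power_graph_def gyro_carrier_def)
  obtain k where k: "k > 0" "gyro_pow 3 u k = v \<or> gyro_pow 3 v k = u" using ex by blast
  have pv: "gyro_pow 3 v k = (if even k then 0 else v)" using gp_H3 assms(2) uv by blast
  show ?thesis
  proof (cases "u < 4")
    case True
    have "gyro_pow 3 u k = (k * u) mod 4" using gp_P[of u 3 k] True by simp
    then have "gyro_pow 3 u k \<noteq> v" using assms(2) by simp
    then show ?thesis using k pv uv by (auto split: if_splits)
  next
    case False
    have "gyro_pow 3 u k = (if even k then 0 else u)" using gp_H3[of u k] False uv by simp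
    then show ?thesis using k pv uv assms(2) False by (auto split: if_splits)
  qed
qed

lemma pair_conv:
  assumes "tail K = fst" "head K = snd"
  shows "K = with_proj \<lparr>pverts = verts K, parcs = arcs K\<rparr>"
  using assms by (cases K) (simp add: with_proj_def)

lemma subdiv_bidirK:
  assumes "subdivision (K, rK) (H, rH)"
  shows "bidirected_digraph K rK"
  using assms by induct auto

lemma verts3_pair:
  assumes "subdivision_pair K H"
  shows "verts3 K = verts3 H"
  using assms
proof (induct rule: subdivision_pair_induct)
  case base
  then show ?case by simp
next
  case (divide e w H)
  interpret pair_bidirected_digraph H using divide(3) by (rule bidirected_digraphI_subdivision)
  show ?case using divide verts3_subdivide by simp
qed

lemma verts3_sub:
  assumes sd: "subdivision (K, rK) (H, rH)" and tH: "tail H = fst" and hH: "head H = snd"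
  shows "verts3 K = verts3 H \<and> K = with_proj \<lparr>pverts = verts K, parcs = arcs K\<rparr>"
proof -
  have "compatible K H" using sd by (rule subdivision_compatible)
  then have tK: "tail K = fst" and hK: "head K = snd" using tH hH by (auto simp: compatible_def)
  have c2: "K = with_proj \<lparr>pverts = verts K, parcs = arcs K\<rparr>" using pair_conv[OF tK hK] .
  obtain K' where K: "K = with_proj K'" using c2 by blast
  obtain H' where H: "H = with_proj H'" using pair_conv[OF tH hH] by blast
  have rK: "rK = swap_in (parcs K')"
    using subdiv_bidirK[OF sd] unfolding K by (rule bidirected_digraph_rev_conv_pair)
  have rH: "rH = swap_in (parcs H')"
    using subdivision_bidir[OF sd] unfolding H by (rule bidirected_digraph_rev_conv_pair)
  have "subdivision_pair K' H'" using sd unfolding K H rK rH .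
  then have "verts3 K' = verts3 H'" by (rule verts3_pair)
  then have "verts3 K = verts3 H" unfolding K H .
  then show ?thesis using c2 by blast
qed

lemma card_K:
  assumes "K\<^bsub>3,3\<^esub> K \<or> K\<^bsub>5\<^esub> K"
  shows "5 \<le> card (verts K)"
  using assms
proof
  assume "K\<^bsub>3,3\<^esub> K"
  then obtain U V where UV: "verts K = U \<union> V" "U \<inter> V = {}" "card U = 3" "card V = 3"
    unfolding complete_bipartite_digraph_def by blast
  have "finite U" "finite V" using UV by (auto intro: card_ge_0_finite)
  then have "card (verts K) = 6" using UV by (simp add: card_Un_disjoint)
  then show ?thesis by simp
next
  assume "K\<^bsub>5\<^esub> K"
  then show ?thesis unfolding complete_digraph_def by simp
qed

lemma planar3: "kuratowski_planar (with_proj (power_graph 3))"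
  unfolding kuratowski_planar_def
proof (intro notI, elim exE conjE)
  fix H K rK rH
  assume sg: "subgraph H (with_proj (power_graph 3))"
    and sd: "subdivision (K, rK) (H, rH)" and kk: "K\<^bsub>3,3\<^esub> K \<or> K\<^bsub>5\<^esub> K"
  have comp: "compatible (with_proj (power_graph 3)) H" and vH: "verts H \<subseteq> {0..<8}"
    and aH: "arcs H \<subseteq> parcs (power_graph 3)"
    using sg by (auto simp: subgraph_def power_graph_def gyro_carrier_def)
  then have tH: "tail H = fst" and hH: "head H = snd" by (auto simp: compatible_def)
  obtain K' where K: "K = with_proj K'" and v3: "verts3 K = verts3 H"
    using verts3_sub[OF sd tH hH] by blast
  have "verts3 K = verts K"
    using kk unfolding K using verts3_K33[of K'] verts3_K5[of K'] by auto
  then have c5: "5 \<le> card (verts3 H)" using card_K[OF kk] v3 by simp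
  have "verts3 H \<subseteq> {0,1,2,3}"
  proof
    fix v assume v: "v \<in> verts3 H"
    then have vv: "v \<in> verts H" and d: "2 < in_degree H v" by (auto simp: verts3_def)
    show "v \<in> {0,1,2,3}"
    proof (rule ccontr)
      assume "v \<notin> {0,1,2,3}"
      then have v4: "4 \<le> v" using vv vH by auto
      have "in_arcs H v \<subseteq> {(0, v)}"
      proof
        fix e assume "e \<in> in_arcs H v"
        then have e: "e \<in> arcs H" "snd e = v" using hH by auto
        obtain a b where ab: "e = (a, b)" by (cases e)
        then have "(a, v) \<in> parcs (power_graph 3)" using e aH by auto
        then have "a = 0" using arc3 v4 by blast
        then show "e \<in> {(0, v)}" using ab e by simp
      qed
      then have "in_degree H v \<le> 1" unfolding in_degree_def
        by (metis card.empty card.insert card_mono empty_iff finite.emptyI finite.insertI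
            One_nat_def)
      then show False using d by simp
    qed
  qed
  then have "card (verts3 H) \<le> card {0::nat,1,2,3}" by (rule card_mono[rotated]) simp
  then show False using c5 by simp
qed

theorem mainTheorem1:
  fixes n :: nat
  assumes "n \<ge> 3"
  shows "kuratowski_planar (with_proj (power_graph n)) \<longleftrightarrow> n = 3"
proof (cases "n = 3")
  case True
  then show ?thesis using planar3 by simp
next
  case False
  then have "n \<ge> 4" using assms by simp
  then show ?thesis using not_planar False by simp
qed

end
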